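(* Let $K=3$ and $r^\star(a)=\mathbb{1}(a=1)$ for $a\in\{1,2,3\}$. For every integer $n>500$ there exists a distribution $\mu$ on ordered pairs of distinct arms such that, if $\mathcal{D}$ consists of $n$ i.i.d. samples generated as in the context, then with probability at least $0.09$ the following holds: the empirical loss $\hat{\mathcal{L}}_{\mathsf{CE}}(\mathcal{D},\cdot)$ has no minimizer on $R_0=\{r\in\mathbb{R}^3: r(3)=0\}$, and for every sequence $(r^{(m)})_{m\ge1}\subset R_0$ with $\hat{\mathcal{L}}_{\mathsf{CE}}(\mathcal{D},r^{(m)})\to\inf_{r\in R_0}\hat{\mathcal{L}}_{\mathsf{CE}}(\mathcal{D},r)$ we have $$\mathcal{L}_{\mathsf{CE}}(r^{(m)})-\mathcal{L}_{\mathsf{CE}}(r^\star)\to+\infty\quad(m\to\infty).$$ (In the paper's phrasing: with probability at least $0.09$, $\mathcal{L}_{\mathsf{CE}}(\hat r_{\mathsf{MLE}})-\mathcal{L}_{\mathsf{CE}}(r^\star)\ge C$ for arbitrarily large $C$.)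
   Context: $K$-armed bandit preference model. Arms are $[K]$, with deterministic ground-truth rewards $r^\star(a)$. Let $\sigma(x)=e^x/(1+e^x)$. A sample $(a,a',y)$ is generated by drawing $(a,a')\sim\mu$ (a distribution on ordered pairs of distinct arms) and then $y\sim\mathrm{Bernoulli}(\sigma(r^\star(a)-r^\star(a')))$, $y=1$ meaning $a$ is preferred to $a'$; the dataset $\mathcal{D}=\{(a_i,a_i',y_i)\}_{i=1}^n$ consists of $n$ i.i.d. samples. Empirical cross-entropy loss: $$\hat{\mathcal{L}}_{\mathsf{CE}}(\mathcal{D},r)=-\frac1n\sum_{i=1}^n\Big[y_i\log\sigma(r(a_i)-r(a_i'))+(1-y_i)\log\sigma(r(a_i')-r(a_i))\Big].$$ Population cross-entropy loss: $$\mathcal{L}_{\mathsf{CE}}(r)=-\mathbb{E}_{(a,a')\sim\mu}\Big[\sigma(r^\star(a)-r^\star(a'))\log\sigma(r(a)-r(a'))+\sigma(r^\star(a')-r^\star(a))\log\sigma(r(a')-r(a))\Big].$$ The MLE $\hat r_{\mathsf{MLE}}$ is the minimizer of the empirical loss normalized by $\hat r(K)=0$. *)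

theory Defs
  imports "HOL-Analysis.Analysis" "HOL-Probability.Probability"
begin

text \<open>Arms are the naturals 1, 2, 3 (K = 3). A reward function is r :: nat => real;
  only its values on arms matter.\<close>

definition sigm :: "real \<Rightarrow> real" where
  "sigm x = exp x / (1 + exp x)"

definition rstar :: "nat \<Rightarrow> real" where
  "rstar a = (if a = 1 then 1 else 0)"

definition arms :: "nat set" where
  "arms = {1, 2, 3}"

definition arm_pairs :: "(nat \<times> nat) set" where
  "arm_pairs = {(a, b). a \<in> arms \<and> b \<in> arms \<and> a \<noteq> b}"

text \<open>R_0 = {r in R^3 : r(3) = 0}; functions vanish outside the arms so that R_0 is exactly R^3 with r 3 = 0.\<close>
definition R0 :: "(nat \<Rightarrow> real) set" where
  "R0 = {r. r 3 = 0 \<and> (\<forall>a. a \<notin> arms \<longrightarrow> r a = 0)}"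

text \<open>One sample (a, a', y): (a, a') ~ mu, y ~ Bernoulli(sigma(r*(a) - r*(a'))); y = True means y = 1.\<close>
definition sample_pmf :: "(nat \<times> nat) pmf \<Rightarrow> (nat \<times> nat \<times> bool) pmf" where
  "sample_pmf \<mu> = bind_pmf \<mu> (\<lambda>(a, a'). map_pmf (\<lambda>y. (a, a', y))
       (bernoulli_pmf (sigm (rstar a - rstar a'))))"

definition data_pmf :: "nat \<Rightarrow> (nat \<times> nat) pmf \<Rightarrow> (nat \<Rightarrow> nat \<times> nat \<times> bool) pmf" where
  "data_pmf n \<mu> = Pi_pmf {..<n} (0, 0, False) (\<lambda>_. sample_pmf \<mu>)"

definition emp_CE :: "nat \<Rightarrow> (nat \<Rightarrow> nat \<times> nat \<times> bool) \<Rightarrow> (nat \<Rightarrow> real) \<Rightarrow> real" where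
  "emp_CE n D r = - (1 / real n) * (\<Sum>i<n. case D i of (a, a', y) \<Rightarrow>
      of_bool y * ln (sigm (r a - r a')) + (1 - of_bool y) * ln (sigm (r a' - r a)))"

definition pop_CE :: "(nat \<times> nat) pmf \<Rightarrow> (nat \<Rightarrow> real) \<Rightarrow> real" where
  "pop_CE \<mu> r = - measure_pmf.expectation \<mu> (\<lambda>(a, a').
      sigm (rstar a - rstar a') * ln (sigm (r a - r a'))
      + sigm (rstar a' - rstar a) * ln (sigm (r a' - r a)))"

end

theory Submission
  imports Defs
begin

lemma sigm_pos: "0 < sigm x" by (simp add: sigm_def add_pos_pos)
lemma sigm_lt1: "sigm x < 1"
proof -
  have "0 < 1 + exp x" by (simp add: add_pos_pos)
  then show ?thesis by (simp add: sigm_def pos_divide_less_eq)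
qed
lemma ln_sigm_le: "ln (sigm x) \<le> 0"
  using sigm_pos[of x] sigm_lt1[of x] by simp

definition BB :: "real \<Rightarrow> real" where "BB x = ln (1 + exp x)"

lemma sigm_neg: "sigm (-x) = 1 / (1 + exp x)"
  by (simp add: sigm_def exp_minus field_simps)

lemma ln_sigm_eq: "ln (sigm x) = - BB (-x)"
proof -
  have "sigm x = 1 / (1 + exp (-x))" using sigm_neg[of "-x"] by simp
  then show ?thesis by (simp add: BB_def ln_div add_pos_pos)
qed

lemma BB_pos: "0 < BB x" by (simp add: BB_def add_pos_pos)
lemma BB_le_exp: "BB x \<le> exp x" unfolding BB_def by (rule ln_add_one_self_le_self) simp
lemma BB_ge: "x \<le> BB x"
proof -
  have "ln (exp x) \<le> ln (1 + exp x)" by (subst ln_le_cancel_iff) (auto simp: add_pos_pos)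
  then show ?thesis by (simp add: BB_def)
qed
lemma BB_mono: "x \<le> y \<Longrightarrow> BB x \<le> BB y"
  unfolding BB_def by (subst ln_le_cancel_iff) (auto simp: add_pos_pos)

lemma prob_bind_bern:
  assumes "0 \<le> p" "p \<le> 1"
  shows "measure_pmf.prob (bind_pmf (bernoulli_pmf p) f) A =
     p * measure_pmf.prob (f True) A + (1-p) * measure_pmf.prob (f False) A"
proof -
  have "emeasure (measure_pmf (bind_pmf (bernoulli_pmf p) f)) A =
     (\<integral>\<^sup>+b. ennreal (measure_pmf.prob (f b) A) \<partial>bernoulli_pmf p)"
    unfolding emeasure_bind_pmf by (simp add: measure_pmf.emeasure_eq_measure)
  also have "\<dots> = ennreal (measure_pmf.prob (f True) A) * ennreal p
      + ennreal (measure_pmf.prob (f False) A) * ennreal (1 - p)"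
    using assms by (subst nn_integral_bernoulli_pmf) auto
  also have "\<dots> = ennreal (p * measure_pmf.prob (f True) A + (1-p) * measure_pmf.prob (f False) A)"
    using assms by (simp add: ennreal_mult' ennreal_plus mult.commute)
  finally have "ennreal (measure_pmf.prob (bind_pmf (bernoulli_pmf p) f) A) =
     ennreal (p * measure_pmf.prob (f True) A + (1-p) * measure_pmf.prob (f False) A)"
    using assms by (simp add: measure_pmf.emeasure_eq_measure)
  then show ?thesis
    using assms by (subst (asm) ennreal_inj) auto
qed

lemma emp_nonneg: "0 \<le> emp_CE n D r"
proof -
  have "(\<Sum>i<n. case D i of (a, a', y) \<Rightarrow>
      of_bool y * ln (sigm (r a - r a')) + (1 - of_bool y) * ln (sigm (r a' - r a))) \<le> 0"
    by (intro sum_nonpos) (auto split: prod.split simp: ln_sigm_le)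
  then show ?thesis unfolding emp_CE_def
    by (simp add: divide_nonpos_nonneg)
qed

lemma shift:
  assumes D: "\<forall>i<n. (\<exists>y. D i = (1,3,y)) \<or> D i = (2,3,False)" and r: "r \<in> R0"
  shows "emp_CE n D (r(2:=t)) = emp_CE n D r
     + (card {i\<in>{..<n}. D i = (2,3,False)} / n) * (BB t - BB (r 2))"
proof -
  define tm where "tm = (\<lambda>r i. case D i of (a, a', y) \<Rightarrow>
      of_bool y * ln (sigm (r a - r a')) + (1 - of_bool y) * ln (sigm (r a' - r a)))"
  have r3: "r 3 = 0" using r by (simp add: R0_def)
  have eq: "tm (r(2:=t)) i = tm r i + (if D i = (2,3,False) then - (BB t - BB (r 2)) else 0)"
    if "i < n" for i
  proof -
    from D that consider y where "D i = (1,3,y)" | "D i = (2,3,False)" by blast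
    then show ?thesis
    proof cases
      case 1 then show ?thesis by (simp add: tm_def)
    next
      case 2 then show ?thesis
        by (simp add: tm_def r3 ln_sigm_eq)
    qed
  qed
  have "(\<Sum>i<n. tm (r(2:=t)) i) = (\<Sum>i<n. tm r i) +
     (\<Sum>i<n. (if D i = (2,3,False) then - (BB t - BB (r 2)) else 0))"
    using eq by (simp add: sum.distrib)
  also have "(\<Sum>i<n. (if D i = (2,3,False) then - (BB t - BB (r 2)) else 0))
     = card {i\<in>{..<n}. D i = (2,3,False)} * (- (BB t - BB (r 2)))"
    by (subst sum.inter_filter[symmetric]) auto
  finally have calc: "sum (tm (r(2:=t))) {..<n} = sum (tm r) {..<n}
     + card {i\<in>{..<n}. D i = (2,3,False)} * (- (BB t - BB (r 2)))" .
  have e1: "\<And>r'. emp_CE n D r' = -(1/n) * sum (tm r') {..<n}"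
    by (simp add: emp_CE_def tm_def)
  show ?thesis unfolding e1 calc by (simp add: divide_inverse algebra_simps)
qed

lemma R0_zero: "(\<lambda>_. 0) \<in> R0" by (simp add: R0_def)
lemma R0_upd: "r \<in> R0 \<Longrightarrow> r(2:=t) \<in> R0" by (simp add: R0_def arms_def)

lemma det:
  assumes D: "\<forall>i<n. (\<exists>y. D i = (1,3,y)) \<or> D i = (2,3,False)"
    and ex: "\<exists>i<n. D i = (2,3,False)"
  shows "(\<not> (\<exists>r\<in>R0. \<forall>s\<in>R0. emp_CE n D r \<le> emp_CE n D s)) \<and>
    (\<forall>rs :: nat \<Rightarrow> nat \<Rightarrow> real. (\<forall>m. rs m \<in> R0) \<longrightarrow>
       (\<lambda>m. emp_CE n D (rs m)) \<longlonglongrightarrow> (INF r\<in>R0. emp_CE n D r) \<longrightarrow>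
       (\<lambda>m. BB (rs m 2)) \<longlonglongrightarrow> 0)"
proof -
  define L where "L = emp_CE n D"
  define I where "I = (INF r\<in>R0. L r)"
  define c where "c = real (card {i\<in>{..<n}. D i = (2,3,False)}) / n"
  from ex obtain i0 where i0: "i0 < n" "D i0 = (2,3,False)" by blast
  have "card {i\<in>{..<n}. D i = (2,3,False)} > 0"
    using i0 by (subst card_gt_0_iff) auto
  moreover have "n > 0" using i0 by simp
  ultimately have cpos: "c > 0" by (simp add: c_def)
  have bdd: "bdd_below (L ` R0)"
    by (rule bdd_belowI[of _ 0]) (auto simp: L_def emp_nonneg)
  have shiftL: "L (r(2:=t)) = L r + c * (BB t - BB (r 2))" if "r \<in> R0" for r t
    unfolding L_def c_def using shift[OF D that] by simp
  have key: "I \<le> L r - c * BB (r 2)" if r: "r \<in> R0" for r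
  proof (rule field_le_epsilon)
    fix e :: real assume e: "0 < e"
    define t where "t = ln (e / c)"
    have "BB t \<le> e / c" using BB_le_exp[of t] e cpos by (simp add: t_def)
    hence "c * BB t \<le> e" using cpos by (simp add: field_simps)
    have "I \<le> L (r(2:=t))" unfolding I_def
      by (rule cINF_lower[OF bdd R0_upd[OF r]])
    also have "\<dots> = L r + c * (BB t - BB (r 2))" by (rule shiftL[OF r])
    also have "\<dots> \<le> L r - c * BB (r 2) + e" using \<open>c * BB t \<le> e\<close>
      by (simp add: algebra_simps)
    finally show "I \<le> L r - c * BB (r 2) + e" .
  qed
  have part1: "\<not> (\<exists>r\<in>R0. \<forall>s\<in>R0. L r \<le> L s)"
  proof
    assume "\<exists>r\<in>R0. \<forall>s\<in>R0. L r \<le> L s"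
    then obtain r where r: "r \<in> R0" "\<forall>s\<in>R0. L r \<le> L s" by blast
    have "L r \<le> I" unfolding I_def using R0_zero r(2) by (intro cINF_greatest) auto
    moreover have "0 < c * BB (r 2)" using cpos BB_pos by simp
    ultimately show False using key[OF r(1)] by simp
  qed
  have part2: "(\<lambda>m. BB (rs m 2)) \<longlonglongrightarrow> 0"
    if rs: "\<forall>m. rs m \<in> R0" and lim: "(\<lambda>m. L (rs m)) \<longlonglongrightarrow> I" for rs :: "nat \<Rightarrow> nat \<Rightarrow> real"
  proof (rule tendsto_sandwich)
    show "\<forall>\<^sub>F m in sequentially. 0 \<le> BB (rs m 2)"
      using BB_pos by (simp add: less_imp_le)
    show "\<forall>\<^sub>F m in sequentially. BB (rs m 2) \<le> (L (rs m) - I) / c"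
      using key rs cpos by (simp add: field_simps)
    show "(\<lambda>m. 0) \<longlonglongrightarrow> (0::real)" by simp
    have "(\<lambda>m. (L (rs m) - I) / c) \<longlonglongrightarrow> (I - I) / c"
      using cpos by (intro tendsto_intros lim) auto
    then show "(\<lambda>m. (L (rs m) - I) / c) \<longlonglongrightarrow> 0" by (metis diff_self div_0)
  qed
  show ?thesis using part1 part2 unfolding L_def I_def by blast
qed

definition mu :: "real \<Rightarrow> (nat \<times> nat) pmf" where
  "mu p = map_pmf (\<lambda>b. if b then (2,3) else (1,3)) (bernoulli_pmf p)"

lemma pop_lower:
  assumes "0 \<le> p" "p \<le> 1" "r \<in> R0"
  shows "(p/2) * (- r 2) \<le> pop_CE (mu p) r"
proof -
  have r3: "r 3 = 0" using assms by (simp add: R0_def)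
  have s0: "sigm 0 = 1/2" by (simp add: sigm_def)
  define g13 where "g13 = sigm 1 * ln (sigm (r 1)) + sigm (-1) * ln (sigm (- r 1))"
  have g13: "g13 \<le> 0" unfolding g13_def
    using sigm_pos[of 1] sigm_pos[of "-1"] ln_sigm_le[of "r 1"] ln_sigm_le[of "- r 1"]
    by (simp add: add_nonpos_nonpos mult_nonneg_nonpos less_imp_le)
  have pop: "pop_CE (mu p) r = - (p * ((1/2) * ln (sigm (r 2)) + (1/2) * ln (sigm (- r 2))) + (1-p) * g13)"
    using assms unfolding pop_CE_def mu_def g13_def by (simp add: rstar_def r3 s0)
  have "(1/2) * ln (sigm (r 2)) + (1/2) * ln (sigm (- r 2)) \<le> (1/2) * ln (sigm (r 2))"
    using ln_sigm_le[of "- r 2"] by simp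
  also have "\<dots> = - (1/2) * BB (- r 2)" by (simp add: ln_sigm_eq)
  also have "\<dots> \<le> - (1/2) * (- r 2)" using BB_ge[of "- r 2"] by simp
  finally have h: "(1/2) * ln (sigm (r 2)) + (1/2) * ln (sigm (- r 2)) \<le> (1/2) * r 2" by simp
  have "p * ((1/2) * ln (sigm (r 2)) + (1/2) * ln (sigm (- r 2))) \<le> p * ((1/2) * r 2)"
    using h assms by (intro mult_left_mono) auto
  moreover have "(1-p) * g13 \<le> 0" using g13 assms by (simp add: mult_nonneg_nonpos)
  ultimately show ?thesis unfolding pop by (simp add: algebra_simps)
qed

lemma lim_pop:
  assumes p: "0 < p" "p \<le> 1" and rs: "\<forall>m. rs m \<in> R0" and lim: "(\<lambda>m. BB (rs m 2)) \<longlonglongrightarrow> 0"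
  shows "filterlim (\<lambda>m. pop_CE (mu p) (rs m) - pop_CE (mu p) rstar) at_top sequentially"
  unfolding filterlim_at_top
proof
  fix Z :: real
  define M where "M = 2 * (Z + pop_CE (mu p) rstar) / p"
  have "\<forall>\<^sub>F m in sequentially. BB (rs m 2) < BB (- M)"
    using order_tendstoD(2)[OF lim BB_pos] .
  then show "\<forall>\<^sub>F m in sequentially. Z \<le> pop_CE (mu p) (rs m) - pop_CE (mu p) rstar"
  proof (rule eventually_mono)
    fix m assume h: "BB (rs m 2) < BB (- M)"
    have lt: "rs m 2 < - M"
    proof (rule ccontr)
      assume "\<not> rs m 2 < - M"
      then have "BB (- M) \<le> BB (rs m 2)" by (intro BB_mono) simp
      with h show False by simp
    qed
    have "p / 2 * M \<le> p / 2 * (- rs m 2)" using lt p by (intro mult_left_mono) auto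
    also have "\<dots> \<le> pop_CE (mu p) (rs m)" using pop_lower[of p "rs m"] p rs by simp
    finally have "p / 2 * M \<le> pop_CE (mu p) (rs m)" .
    moreover have "p / 2 * M = Z + pop_CE (mu p) rstar" using p by (simp add: M_def)
    ultimately show "Z \<le> pop_CE (mu p) (rs m) - pop_CE (mu p) rstar" by simp
  qed
qed

lemma sigm_le1: "sigm x \<le> 1" using sigm_lt1[of x] by simp
lemma sigm_ge0: "0 \<le> sigm x" using sigm_pos[of x] by simp

lemma sample_mu: "sample_pmf (mu p) = bind_pmf (bernoulli_pmf p) (\<lambda>b. if b
   then map_pmf (\<lambda>y. (2,3,y)) (bernoulli_pmf (sigm 0))
   else map_pmf (\<lambda>y. (1,3,y)) (bernoulli_pmf (sigm 1)))"
  unfolding sample_pmf_def mu_def bind_map_pmf by (intro bind_pmf_cong) (auto simp: rstar_def)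

definition SS :: "(nat \<times> nat \<times> bool) set" where
  "SS = {x. (\<exists>y. x = (1,3,y)) \<or> x = (2,3,False)}"
definition TT :: "(nat \<times> nat \<times> bool) set" where
  "TT = {x. \<exists>y. x = (1,3,y)}"

lemma probS: assumes "0 \<le> p" "p \<le> 1"
  shows "measure_pmf.prob (sample_pmf (mu p)) SS = 1 - p/2"
proof -
  have v1: "(\<lambda>y. (2::nat,3::nat,y)) -` SS = {False}" by (auto simp: SS_def)
  have v2: "(\<lambda>y. (Suc 0,3::nat,y)) -` SS = UNIV" by (auto simp: SS_def)
  have s0: "sigm 0 = 1/2" by (simp add: sigm_def)
  show ?thesis unfolding sample_mu using assms
    by (simp add: prob_bind_bern v1 v2 measure_pmf_single s0 algebra_simps)
qed

lemma probT: assumes "0 \<le> p" "p \<le> 1"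
  shows "measure_pmf.prob (sample_pmf (mu p)) TT = 1 - p"
proof -
  have v1: "(\<lambda>y. (2::nat,3::nat,y)) -` TT = {}" by (auto simp: TT_def)
  have v2: "(\<lambda>y. (Suc 0,3::nat,y)) -` TT = UNIV" by (auto simp: TT_def)
  show ?thesis unfolding sample_mu using assms
    by (simp add: prob_bind_bern v1 v2)
qed

lemma numeric:
  assumes "n > (500::nat)"
  shows "(1 - (1/real n)/2) ^ n - (1 - 1/real n) ^ n \<ge> 0.09"
proof -
  have n0: "real n > 500" using assms by simp
  have bern: "1 + real n * (- (1/(2*real n))) \<le> (1 + (- (1/(2*real n)))) ^ n"
    by (rule Bernoulli_inequality) (use n0 in simp)
  have eq2: "1 + (- (1/(2*real n))) = 1 - (1/real n)/2" by simp
  have eq1: "1 + real n * (- (1/(2*real n))) = 1/2" using n0 by simp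
  have a: "1/2 \<le> (1 - (1/real n)/2) ^ n" using bern unfolding eq1 eq2 .
  have "(1 - 1/real n) ^ n \<le> exp (- (1/real n)) ^ n"
    by (rule power_mono) (use n0 exp_ge_add_one_self[of "- (1/real n)"] in auto)
  also have "\<dots> = exp (real n * (- (1/real n)))" by (simp only: exp_of_nat_mult)
  also have "\<dots> = exp (-1)" using n0 by simp
  also have "\<dots> \<le> 2/5"
  proof -
    have "1 + 1 + (1::real)\<^sup>2 / 2 \<le> exp 1" by (rule exp_lower_Taylor_quadratic) simp
    then have "5/2 \<le> exp (1::real)" by simp
    then show ?thesis by (simp add: exp_minus field_simps)
  qed
  finally show ?thesis using a by simp
qed

theorem theorem2:
  fixes n :: nat
  assumes "n > 500"
  shows "\<exists>\<mu> :: (nat \<times> nat) pmf. set_pmf \<mu> \<subseteq> arm_pairs \<and>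
    measure_pmf.prob (data_pmf n \<mu>)
      {D. (\<not> (\<exists>r\<in>R0. \<forall>s\<in>R0. emp_CE n D r \<le> emp_CE n D s)) \<and>
          (\<forall>rs :: nat \<Rightarrow> nat \<Rightarrow> real. (\<forall>m. rs m \<in> R0) \<longrightarrow>
             (\<lambda>m. emp_CE n D (rs m)) \<longlonglongrightarrow> (INF r\<in>R0. emp_CE n D r) \<longrightarrow>
             filterlim (\<lambda>m. pop_CE \<mu> (rs m) - pop_CE \<mu> rstar) at_top sequentially)}
    \<ge> 0.09"
proof -
  define p where "p = 1 / real n"
  have p: "0 < p" "p \<le> 1" using assms by (auto simp: p_def)
  define PS where "PS = Pi {..<n} (\<lambda>_. SS)"
  define PT where "PT = Pi {..<n} (\<lambda>_. TT)"
  define Q where "Q = data_pmf n (mu p)"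
  let ?A = "{D. (\<not> (\<exists>r\<in>R0. \<forall>s\<in>R0. emp_CE n D r \<le> emp_CE n D s)) \<and>
          (\<forall>rs :: nat \<Rightarrow> nat \<Rightarrow> real. (\<forall>m. rs m \<in> R0) \<longrightarrow>
             (\<lambda>m. emp_CE n D (rs m)) \<longlonglongrightarrow> (INF r\<in>R0. emp_CE n D r) \<longrightarrow>
             filterlim (\<lambda>m. pop_CE (mu p) (rs m) - pop_CE (mu p) rstar) at_top sequentially)}"
  have setp: "set_pmf (mu p) \<subseteq> arm_pairs"
    by (auto simp: mu_def arm_pairs_def arms_def)
  have mS: "measure_pmf.prob Q PS = (1 - p/2) ^ n"
    unfolding Q_def data_pmf_def PS_def
    by (subst measure_Pi_pmf_Pi) (use p in \<open>simp_all add: probS\<close>)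
  have mT: "measure_pmf.prob Q PT = (1 - p) ^ n"
    unfolding Q_def data_pmf_def PT_def
    by (subst measure_Pi_pmf_Pi) (use p in \<open>simp_all add: probT\<close>)
  have sub: "PT \<subseteq> PS" by (auto simp: PS_def PT_def SS_def TT_def)
  have mE: "measure_pmf.prob Q (PS - PT) = (1 - p/2) ^ n - (1 - p) ^ n"
    using measure_pmf.finite_measure_Diff[of PS Q PT] sub mS mT by simp
  have incl: "PS - PT \<subseteq> ?A"
  proof
    fix D assume "D \<in> PS - PT"
    then have D: "\<forall>i<n. (\<exists>y. D i = (1,3,y)) \<or> D i = (2,3,False)"
      and ex: "\<exists>i<n. D i = (2,3,False)"
      by (auto simp: PS_def PT_def SS_def TT_def Pi_iff)
    show "D \<in> ?A" using det[OF D ex] lim_pop[OF p] by blast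
  qed
  have "measure_pmf.prob Q (PS - PT) \<le> measure_pmf.prob Q ?A"
    by (rule measure_pmf.finite_measure_mono[OF incl]) simp
  moreover have "0.09 \<le> (1 - p/2) ^ n - (1 - p) ^ n"
    using numeric[OF assms] by (simp add: p_def)
  ultimately show ?thesis using setp mE unfolding Q_def by (intro exI[of _ "mu p"]) auto
qed

end
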